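(* Let $\rho_1\neq\rho_2$ be two rays of $C_{6,2}$ of type $(3,3)$ and let $\tau$ be the 2-face of $C_{6,2}$ spanned by $\rho_1$ and $\rho_2$. Then $\tau\subseteq\Phi(\mathcal Z_2^6)$.
   Context: $\mathcal Z_2$ is the set of zonoids in $\mathbb R^2$ (equivalently, centrally symmetric convex bodies). For $Z=(Z_1,\dots,Z_6)\in\mathcal Z_2^6$ let $\mathrm V_{ij}=\mathrm V(Z_i,Z_j)$ be the mixed area, and $\Phi(Z)\in\mathbb R^{15}$ the vector with coordinates $\mathrm V_{I_1}\mathrm V_{I_2}\mathrm V_{I_3}$ indexed by all partitions $I_1|I_2|I_3$ of $[6]$ into pairs. $C_{6,2}$ is the conic hull of $\Phi(\mathcal Z_2^6)$ (a polyhedral cone in which any two extreme rays span a 2-face). For a 6-tuple $U$ of nonzero vectors in $\mathbb R^2$, $\Phi(U)=\Phi([0,u_1],\dots,[0,u_6])$. A ray is of type $(3,3)$ if it is spanned by $\Phi(U)$ for some $U$ such that $[6]=J_1\sqcup J_2$ with $|J_1|=|J_2|=3$, the vectors indexed by $J_1$ are pairwise parallel, those indexed by $J_2$ are pairwise parallel, and no vector indexed by $J_1$ is parallel to one indexed by $J_2$. *)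

theory Defs
  imports "HOL-Analysis.Analysis"
begin

text \<open>Zonoids in the plane = centrally symmetric convex bodies
  (nonempty compact convex sets symmetric about some centre).\<close>
definition zonoid2 :: "(real^2) set \<Rightarrow> bool" where
  "zonoid2 K \<longleftrightarrow> K \<noteq> {} \<and> compact K \<and> convex K \<and>
     (\<exists>c. \<forall>x\<in>K. 2 *\<^sub>R c - x \<in> K)"

definition minkowski_sum :: "(real^2) set \<Rightarrow> (real^2) set \<Rightarrow> (real^2) set" where
  "minkowski_sum K L = {x + y | x y. x \<in> K \<and> y \<in> L}"

text \<open>Mixed area, via area(K+L) = area K + 2 V(K,L) + area L.\<close>
definition mixed_area :: "(real^2) set \<Rightarrow> (real^2) set \<Rightarrow> real" where
  "mixed_area K L =
     (measure lebesgue (minkowski_sum K L) - measure lebesgue K - measure lebesgue L) / 2"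

definition pairings6 :: "nat set set set" where
  "pairings6 = {P. (\<Union>P) = {1..6} \<and> (\<forall>B\<in>P. card B = 2) \<and>
                  (\<forall>B\<in>P. \<forall>B'\<in>P. B \<noteq> B' \<longrightarrow> B \<inter> B' = {})}"

text \<open>Phi(Z), a vector in R^15 represented as a function on the pairings
  (zero outside pairings6).\<close>
definition Phi :: "(nat \<Rightarrow> (real^2) set) \<Rightarrow> nat set set \<Rightarrow> real" where
  "Phi Z P = (if P \<in> pairings6 then (\<Prod>B\<in>P. mixed_area (Z (Min B)) (Z (Max B))) else 0)"

definition zonoid_tuples :: "(nat \<Rightarrow> (real^2) set) set" where
  "zonoid_tuples = {Z. \<forall>i\<in>{1..6}. zonoid2 (Z i)}"

definition Phi_image :: "(nat set set \<Rightarrow> real) set" where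
  "Phi_image = Phi ` zonoid_tuples"

definition C62 :: "(nat set set \<Rightarrow> real) set" where
  "C62 = {f. \<exists>(n::nat) (c::nat \<Rightarrow> real) Zs. (\<forall>k<n. c k \<ge> 0 \<and> Zs k \<in> zonoid_tuples) \<and>
                     f = (\<lambda>P. \<Sum>k<n. c k * Phi (Zs k) P)}"

definition PhiU :: "(nat \<Rightarrow> real^2) \<Rightarrow> nat set set \<Rightarrow> real" where
  "PhiU u = Phi (\<lambda>i. closed_segment 0 (u i))"

definition ray_of :: "(nat set set \<Rightarrow> real) \<Rightarrow> (nat set set \<Rightarrow> real) set" where
  "ray_of v = {(\<lambda>P. t * v P) | t. t \<ge> 0}"

definition extreme_ray_C62 :: "(nat set set \<Rightarrow> real) set \<Rightarrow> bool" where
  "extreme_ray_C62 \<rho> \<longleftrightarrow> (\<exists>v. v \<noteq> (\<lambda>P. 0) \<and> \<rho> = ray_of v) \<and> \<rho> \<subseteq> C62 \<and>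
     (\<forall>x y. x \<in> C62 \<longrightarrow> y \<in> C62 \<longrightarrow> (\<lambda>P. x P + y P) \<in> \<rho> \<longrightarrow> x \<in> \<rho> \<and> y \<in> \<rho>)"

definition parallel2 :: "real^2 \<Rightarrow> real^2 \<Rightarrow> bool" where
  "parallel2 u v \<longleftrightarrow> (\<exists>c. u = c *\<^sub>R v)"

definition type33 :: "(nat \<Rightarrow> real^2) \<Rightarrow> bool" where
  "type33 u \<longleftrightarrow> (\<forall>i\<in>{1..6}. u i \<noteq> 0) \<and>
     (\<exists>J1 J2. J1 \<union> J2 = {1..6} \<and> J1 \<inter> J2 = {} \<and> card J1 = 3 \<and> card J2 = 3 \<and>
        (\<forall>i\<in>J1. \<forall>j\<in>J1. parallel2 (u i) (u j)) \<and>
        (\<forall>i\<in>J2. \<forall>j\<in>J2. parallel2 (u i) (u j)) \<and>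
        (\<forall>i\<in>J1. \<forall>j\<in>J2. \<not> parallel2 (u i) (u j)))"

definition ray_type33 :: "(nat set set \<Rightarrow> real) set \<Rightarrow> bool" where
  "ray_type33 \<rho> \<longleftrightarrow> (\<exists>u. type33 u \<and> \<rho> = ray_of (PhiU u))"

text \<open>Conic hull of two rays (the 2-face they span).\<close>
definition cone_sum :: "(nat set set \<Rightarrow> real) set \<Rightarrow> (nat set set \<Rightarrow> real) set \<Rightarrow> (nat set set \<Rightarrow> real) set" where
  "cone_sum A B = {(\<lambda>P. x P + y P) | x y. x \<in> A \<and> y \<in> B}"

end

theory Submission
  imports Defs "HOL-Analysis.Analysis"
begin


definition det2 :: "real^2 \<Rightarrow> real^2 \<Rightarrow> real" where
  "det2 x y = x$1 * y$2 - x$2 * y$1"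

definition pmap :: "real^2 \<Rightarrow> real^2 \<Rightarrow> real^2 \<Rightarrow> real^2" where
  "pmap x y z = z$1 *\<^sub>R x + z$2 *\<^sub>R y"

lemma linear_pmap: "linear (pmap x y)"
  unfolding pmap_def linear_iff by (auto simp: algebra_simps)
    
lemma matrix_pmap: "det (matrix (pmap x y)) = det2 x y"
  by (simp add: det_2 matrix_def pmap_def det2_def axis_def)

lemma measure_box01: "measure lebesgue (cbox (0::real^2) 1) = 1"
proof -
  have "(0::real^2) \<in> cbox 0 1" by (auto simp: mem_box_cart)
  then have "cbox (0::real^2) 1 \<noteq> {}" by blast
  then show ?thesis by (simp add: content_cbox_cart)
qed

lemma measure_pmap: "measure lebesgue (pmap x y ` cbox 0 1) = \<bar>det2 x y\<bar>"
  using measure_linear_image[OF linear_pmap, of "cbox 0 1" x y] by (simp add: matrix_pmap measure_box01)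

lemma seg_image: "closed_segment 0 x = pmap x 0 ` cbox 0 1"
proof
  show "closed_segment 0 x \<subseteq> pmap x 0 ` cbox 0 1"
  proof
    fix p assume "p \<in> closed_segment 0 x"
    then obtain u where u: "0 \<le> u" "u \<le> 1" "p = u *\<^sub>R x" by (auto simp: closed_segment_def)
    have "(vector [u,0] :: real^2) \<in> cbox 0 1" using u by (auto simp: mem_box_cart forall_2)
    moreover have "p = pmap x 0 (vector [u,0])" using u by (simp add: pmap_def)
    ultimately show "p \<in> pmap x 0 ` cbox 0 1" by blast
  qed
  show "pmap x 0 ` cbox 0 1 \<subseteq> closed_segment 0 x"
    by (auto simp: pmap_def closed_segment_def mem_box_cart)
qed

lemma sum_image: "minkowski_sum (closed_segment 0 x) (closed_segment 0 y) = pmap x y ` cbox 0 1"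
proof
  show "minkowski_sum (closed_segment 0 x) (closed_segment 0 y) \<subseteq> pmap x y ` cbox 0 1"
  proof
    fix p assume "p \<in> minkowski_sum (closed_segment 0 x) (closed_segment 0 y)"
    then obtain u v where u: "0 \<le> u" "u \<le> 1" "0 \<le> v" "v \<le> 1" "p = u *\<^sub>R x + v *\<^sub>R y"
      by (auto simp: closed_segment_def minkowski_sum_def)
    have "(vector [u,v] :: real^2) \<in> cbox 0 1" using u by (auto simp: mem_box_cart forall_2)
    moreover have "p = pmap x y (vector [u,v])" using u by (simp add: pmap_def)
    ultimately show "p \<in> pmap x y ` cbox 0 1" by blast
  qed
  show "pmap x y ` cbox 0 1 \<subseteq> minkowski_sum (closed_segment 0 x) (closed_segment 0 y)"
  proof
    fix p assume "p \<in> pmap x y ` cbox 0 1"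
    then obtain z where z: "z \<in> cbox 0 1" "p = pmap x y z" by blast
    have "z$1 *\<^sub>R x \<in> closed_segment 0 x" "z$2 *\<^sub>R y \<in> closed_segment 0 y"
      using z(1) by (auto simp: closed_segment_def mem_box_cart)
    then show "p \<in> minkowski_sum (closed_segment 0 x) (closed_segment 0 y)"
      unfolding minkowski_sum_def z(2) pmap_def by blast
  qed
qed

lemma mixed_seg: "mixed_area (closed_segment 0 x) (closed_segment 0 y) = \<bar>det2 x y\<bar> / 2"
  unfolding mixed_area_def sum_image by (simp add: seg_image measure_pmap det2_def)



lemma partner:
  assumes "P \<in> pairings6"
  obtains m where "\<forall>x\<in>{1..6}. m x \<in> {1..6} \<and> m x \<noteq> x \<and> m (m x) = x"
    and "P = (\<lambda>x. {x, m x}) ` {1..6}"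
proof -
  have U: "\<Union>P = {1..6}" and c2: "\<And>B. B \<in> P \<Longrightarrow> card B = 2"
    and dj: "\<And>B B'. B \<in> P \<Longrightarrow> B' \<in> P \<Longrightarrow> B \<noteq> B' \<Longrightarrow> B \<inter> B' = {}"
    using assms by (simp_all add: pairings6_def)
  have ex: "\<exists>y. y \<noteq> x \<and> {x,y} \<in> P" if "x \<in> {1..6}" for x
  proof -
    have "x \<in> \<Union>P" using U that by simp
    then obtain B where B: "B \<in> P" "x \<in> B" by (rule UnionE)
    then obtain p q where "B = {p,q}" "p \<noteq> q" using c2[OF B(1)] by (auto simp: card_2_iff)
    then show ?thesis using B by (metis insert_commute insertE singletonD)
  qed
  have uniq: "y = z" if "{x,y} \<in> P" "{x,z} \<in> P" "y \<noteq> x" "z \<noteq> x" for x y z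
  proof -
    have "x \<in> {x,y} \<inter> {x,z}" by simp
    then have "{x,y} = {x,z}" using dj[OF that(1,2)] by (metis empty_iff)
    then show ?thesis using that by (metis doubleton_eq_iff)
  qed
  define m where "m x = (SOME y. y \<noteq> x \<and> {x,y} \<in> P)" for x
  have m1: "m x \<noteq> x \<and> {x, m x} \<in> P" if "x \<in> {1..6}" for x
    unfolding m_def using someI_ex[OF ex[OF that]] .
  have inU: "y \<in> {1..6}" if "{x,y} \<in> P" for x y
  proof -
    have "y \<in> \<Union>P" using that by blast
    then show ?thesis using U by simp
  qed
  have "\<forall>x\<in>{1..6}. m x \<in> {1..6} \<and> m x \<noteq> x \<and> m (m x) = x"
  proof
    fix x :: nat assume x: "x \<in> {1..6}"
    have a: "m x \<in> {1..6}" using m1[OF x] inU by blast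
    have "{m x, x} \<in> P" using m1[OF x] by (simp add: insert_commute)
    then have "m (m x) = x" using uniq[of "m x" "m (m x)" x] m1[OF a] m1[OF x] by auto
    then show "m x \<in> {1..6} \<and> m x \<noteq> x \<and> m (m x) = x" using a m1[OF x] by blast
  qed
  moreover have "P = (\<lambda>x. {x, m x}) ` {1..6}"
  proof
    show "(\<lambda>x. {x, m x}) ` {1..6} \<subseteq> P" using m1 by blast
    show "P \<subseteq> (\<lambda>x. {x, m x}) ` {1..6}"
    proof
      fix B assume B: "B \<in> P"
      then obtain p q where pq: "B = {p,q}" "p \<noteq> q" using c2[OF B] by (auto simp: card_2_iff)
      have "p \<in> \<Union>P" using B pq by blast
      then have p: "p \<in> {1..6}" using U by simp
      have "q = m p" using uniq[of p q "m p"] B pq m1[OF p] by auto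
      then show "B \<in> (\<lambda>x. {x, m x}) ` {1..6}" using pq p by blast
    qed
  qed
  ultimately show ?thesis using that by blast
qed


lemma pair15:
  assumes d: "distinct [x1,x2,x3,x4,x5,x6]"
  and U: "{1..6::nat} = {x1,x2,x3,x4,x5,x6}"
  and m: "\<forall>x\<in>{1..6}. m x \<in> {1..6} \<and> m x \<noteq> x \<and> m (m x) = x"
  and P: "P = (\<lambda>x. {x, m x}) ` {1..6}"
  shows "P = {{x1,x2},{x3,x4},{x5,x6}} \<or>
    P = {{x1,x2},{x3,x5},{x4,x6}} \<or>
    P = {{x1,x2},{x3,x6},{x4,x5}} \<or>
    P = {{x1,x3},{x2,x4},{x5,x6}} \<or>
    P = {{x1,x3},{x2,x5},{x4,x6}} \<or>
    P = {{x1,x3},{x2,x6},{x4,x5}} \<or>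
    P = {{x1,x4},{x2,x3},{x5,x6}} \<or>
    P = {{x1,x4},{x2,x5},{x3,x6}} \<or>
    P = {{x1,x4},{x2,x6},{x3,x5}} \<or>
    P = {{x1,x5},{x2,x3},{x4,x6}} \<or>
    P = {{x1,x5},{x2,x4},{x3,x6}} \<or>
    P = {{x1,x5},{x2,x6},{x3,x4}} \<or>
    P = {{x1,x6},{x2,x3},{x4,x5}} \<or>
    P = {{x1,x6},{x2,x4},{x3,x5}} \<or>
    P = {{x1,x6},{x2,x5},{x3,x4}}"
proof -
  have mm: "\<forall>x\<in>{x1,x2,x3,x4,x5,x6}. m x \<in> {x1,x2,x3,x4,x5,x6} \<and> m x \<noteq> x \<and> m (m x) = x"
    using m unfolding U .
  have M: "m x \<in> {x1,x2,x3,x4,x5,x6}" "m x \<noteq> x" "m (m x) = x" if "x \<in> {x1,x2,x3,x4,x5,x6}" for x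
    using mm that by blast+
  note M1 = M[of x1, simplified] and M2 = M[of x2, simplified] and M3 = M[of x3, simplified]
  note M4 = M[of x4, simplified] and M5 = M[of x5, simplified] and M6 = M[of x6, simplified]
  note dd = d[simplified]
  have PP: "P = {{x1, m x1},{x2, m x2},{x3, m x3},{x4, m x4},{x5, m x5},{x6, m x6}}"
    using P U by simp
  have "m x1 = x2 \<or> m x1 = x3 \<or> m x1 = x4 \<or> m x1 = x5 \<or> m x1 = x6" using M1 by auto
  then show ?thesis
  proof (elim disjE)
    assume h1: "m x1 = x2"
    then have h1': "m x2 = x1" using M1(3) by simp
    have "m x3 = x4 \<or> m x3 = x5 \<or> m x3 = x6" using M1 M2 M3 M4 M5 M6 dd h1 h1' by auto
    then show ?thesis
    proof (elim disjE)
      assume h2: "m x3 = x4"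
      then have h2': "m x4 = x3" using M3(3) h2 by simp
      have h3: "m x5 = x6" "m x6 = x5" using M1 M2 M3 M4 M5 M6 dd h1 h1' h2 h2' by auto
      show ?thesis unfolding PP h1 h1' h2 h2' h3 by (simp add: insert_commute)
    next
      assume h2: "m x3 = x5"
      then have h2': "m x5 = x3" using M3(3) h2 by simp
      have h3: "m x4 = x6" "m x6 = x4" using M1 M2 M3 M4 M5 M6 dd h1 h1' h2 h2' by auto
      show ?thesis unfolding PP h1 h1' h2 h2' h3 by (simp add: insert_commute)
    next
      assume h2: "m x3 = x6"
      then have h2': "m x6 = x3" using M3(3) h2 by simp
      have h3: "m x4 = x5" "m x5 = x4" using M1 M2 M3 M4 M5 M6 dd h1 h1' h2 h2' by auto
      show ?thesis unfolding PP h1 h1' h2 h2' h3 by (simp add: insert_commute)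
    qed
  next
    assume h1: "m x1 = x3"
    then have h1': "m x3 = x1" using M1(3) by simp
    have "m x2 = x4 \<or> m x2 = x5 \<or> m x2 = x6" using M1 M2 M3 M4 M5 M6 dd h1 h1' by auto
    then show ?thesis
    proof (elim disjE)
      assume h2: "m x2 = x4"
      then have h2': "m x4 = x2" using M2(3) h2 by simp
      have h3: "m x5 = x6" "m x6 = x5" using M1 M2 M3 M4 M5 M6 dd h1 h1' h2 h2' by auto
      show ?thesis unfolding PP h1 h1' h2 h2' h3 by (simp add: insert_commute)
    next
      assume h2: "m x2 = x5"
      then have h2': "m x5 = x2" using M2(3) h2 by simp
      have h3: "m x4 = x6" "m x6 = x4" using M1 M2 M3 M4 M5 M6 dd h1 h1' h2 h2' by auto
      show ?thesis unfolding PP h1 h1' h2 h2' h3 by (simp add: insert_commute)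
    next
      assume h2: "m x2 = x6"
      then have h2': "m x6 = x2" using M2(3) h2 by simp
      have h3: "m x4 = x5" "m x5 = x4" using M1 M2 M3 M4 M5 M6 dd h1 h1' h2 h2' by auto
      show ?thesis unfolding PP h1 h1' h2 h2' h3 by (simp add: insert_commute)
    qed
  next
    assume h1: "m x1 = x4"
    then have h1': "m x4 = x1" using M1(3) by simp
    have "m x2 = x3 \<or> m x2 = x5 \<or> m x2 = x6" using M1 M2 M3 M4 M5 M6 dd h1 h1' by auto
    then show ?thesis
    proof (elim disjE)
      assume h2: "m x2 = x3"
      then have h2': "m x3 = x2" using M2(3) h2 by simp
      have h3: "m x5 = x6" "m x6 = x5" using M1 M2 M3 M4 M5 M6 dd h1 h1' h2 h2' by auto
      show ?thesis unfolding PP h1 h1' h2 h2' h3 by (simp add: insert_commute)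
    next
      assume h2: "m x2 = x5"
      then have h2': "m x5 = x2" using M2(3) h2 by simp
      have h3: "m x3 = x6" "m x6 = x3" using M1 M2 M3 M4 M5 M6 dd h1 h1' h2 h2' by auto
      show ?thesis unfolding PP h1 h1' h2 h2' h3 by (simp add: insert_commute)
    next
      assume h2: "m x2 = x6"
      then have h2': "m x6 = x2" using M2(3) h2 by simp
      have h3: "m x3 = x5" "m x5 = x3" using M1 M2 M3 M4 M5 M6 dd h1 h1' h2 h2' by auto
      show ?thesis unfolding PP h1 h1' h2 h2' h3 by (simp add: insert_commute)
    qed
  next
    assume h1: "m x1 = x5"
    then have h1': "m x5 = x1" using M1(3) by simp
    have "m x2 = x3 \<or> m x2 = x4 \<or> m x2 = x6" using M1 M2 M3 M4 M5 M6 dd h1 h1' by auto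
    then show ?thesis
    proof (elim disjE)
      assume h2: "m x2 = x3"
      then have h2': "m x3 = x2" using M2(3) h2 by simp
      have h3: "m x4 = x6" "m x6 = x4" using M1 M2 M3 M4 M5 M6 dd h1 h1' h2 h2' by auto
      show ?thesis unfolding PP h1 h1' h2 h2' h3 by (simp add: insert_commute)
    next
      assume h2: "m x2 = x4"
      then have h2': "m x4 = x2" using M2(3) h2 by simp
      have h3: "m x3 = x6" "m x6 = x3" using M1 M2 M3 M4 M5 M6 dd h1 h1' h2 h2' by auto
      show ?thesis unfolding PP h1 h1' h2 h2' h3 by (simp add: insert_commute)
    next
      assume h2: "m x2 = x6"
      then have h2': "m x6 = x2" using M2(3) h2 by simp
      have h3: "m x3 = x4" "m x4 = x3" using M1 M2 M3 M4 M5 M6 dd h1 h1' h2 h2' by auto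
      show ?thesis unfolding PP h1 h1' h2 h2' h3 by (simp add: insert_commute)
    qed
  next
    assume h1: "m x1 = x6"
    then have h1': "m x6 = x1" using M1(3) by simp
    have "m x2 = x3 \<or> m x2 = x4 \<or> m x2 = x5" using M1 M2 M3 M4 M5 M6 dd h1 h1' by auto
    then show ?thesis
    proof (elim disjE)
      assume h2: "m x2 = x3"
      then have h2': "m x3 = x2" using M2(3) h2 by simp
      have h3: "m x4 = x5" "m x5 = x4" using M1 M2 M3 M4 M5 M6 dd h1 h1' h2 h2' by auto
      show ?thesis unfolding PP h1 h1' h2 h2' h3 by (simp add: insert_commute)
    next
      assume h2: "m x2 = x4"
      then have h2': "m x4 = x2" using M2(3) h2 by simp
      have h3: "m x3 = x5" "m x5 = x3" using M1 M2 M3 M4 M5 M6 dd h1 h1' h2 h2' by auto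
      show ?thesis unfolding PP h1 h1' h2 h2' h3 by (simp add: insert_commute)
    next
      assume h2: "m x2 = x5"
      then have h2': "m x5 = x2" using M2(3) h2 by simp
      have h3: "m x3 = x4" "m x4 = x3" using M1 M2 M3 M4 M5 M6 dd h1 h1' h2 h2' by auto
      show ?thesis unfolding PP h1 h1' h2 h2' h3 by (simp add: insert_commute)
    qed
  qed
qed



lemma det2_swap: "\<bar>det2 y x\<bar> = \<bar>det2 x y\<bar>"
  by (simp add: det2_def algebra_simps abs_minus_commute)

lemma blockval:
  "\<bar>det2 (v (min p q)) (v (max p q))\<bar> = \<bar>det2 (v p) (v q)\<bar>"
  by (cases "p \<le> q") (auto simp: max_def min_def det2_swap)

lemma PhiU_eq: "PhiU v P = (if P \<in> pairings6 then (\<Prod>B\<in>P. \<bar>det2 (v (Min B)) (v (Max B))\<bar> / 2) else 0)"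
  unfolding PhiU_def Phi_def by (simp add: mixed_seg)

lemma leafval:
  assumes "P \<in> pairings6" "P = {{p,q},{r,s},{t,u}}" "distinct [p,q,r,s,t,u]"
  shows "PhiU v P = \<bar>det2 (v p) (v q)\<bar> * \<bar>det2 (v r) (v s)\<bar> * \<bar>det2 (v t) (v u)\<bar> / 8"
proof -
  have "{p,q} \<noteq> {r,s}" "{p,q} \<noteq> {t,u}" "{r,s} \<noteq> {t,u}" using assms(3) by (auto simp: doubleton_eq_iff)
  then show ?thesis using assms(1) unfolding PhiU_eq assms(2)
    by (simp add: blockval)
qed

lemma core_distinct:
  fixes a a' b c d d' :: nat
  assumes dist: "distinct [a,a',b,c,d,d']" and U: "{1..6} = {a,a',b,c,d,d'}"
  and hu: "\<And>i j. i\<in>{1..6} \<Longrightarrow> j\<in>{1..6} \<Longrightarrow> \<bar>det2 (u i) (u j)\<bar> = (if (i \<in> {a,a',b}) = (j \<in> {a,a',b}) then 0 else Wu i * Wu j * du)"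
  and hw: "\<And>i j. i\<in>{1..6} \<Longrightarrow> j\<in>{1..6} \<Longrightarrow> \<bar>det2 (w i) (w j)\<bar> = (if (i \<in> {a,a',c}) = (j \<in> {a,a',c}) then 0 else Ww i * Ww j * dw)"
  and nn: "0 \<le> s" "0 \<le> t" "0 \<le> du" "0 \<le> dw" "\<forall>i. 0 \<le> Wu i" "\<forall>i. 0 \<le> Ww i"
  shows "\<exists>v. (\<lambda>P. s * PhiU u P + t * PhiU w P) = PhiU v"
proof -
  have dd: "a \<noteq> a'" "a \<noteq> b" "a \<noteq> c" "a \<noteq> d" "a \<noteq> d'" "a' \<noteq> a" "a' \<noteq> b" "a' \<noteq> c" "a' \<noteq> d" "a' \<noteq> d'" "b \<noteq> a" "b \<noteq> a'" "b \<noteq> c" "b \<noteq> d" "b \<noteq> d'" "c \<noteq> a" "c \<noteq> a'" "c \<noteq> b" "c \<noteq> d" "c \<noteq> d'" "d \<noteq> a" "d \<noteq> a'" "d \<noteq> b" "d \<noteq> c" "d \<noteq> d'" "d' \<noteq> a" "d' \<noteq> a'" "d' \<noteq> b" "d' \<noteq> c" "d' \<noteq> d" using dist by auto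
  have inU: "a \<in> {1..6}" "a' \<in> {1..6}" "b \<in> {1..6}" "c \<in> {1..6}" "d \<in> {1..6}" "d' \<in> {1..6}"
    unfolding U by simp_all
  define sig where "sig = s * du^3 * (Wu a * Wu a' * Wu b * Wu c * Wu d * Wu d') / 8"
  define tau where "tau = t * dw^3 * (Ww a * Ww a' * Ww b * Ww c * Ww d * Ww d') / 8"
  have sig0: "0 \<le> sig" unfolding sig_def using nn by simp
  have tau0: "0 \<le> tau" unfolding tau_def using nn by simp
  define v :: "nat \<Rightarrow> real^2" where "v i = (if i = a \<or> i = a' then vector[1,0] else if i = d \<or> i = d' then vector[0,1]
     else if i = b then vector[1, - 8 * tau] else vector[1, 8 * sig])" for i
  have vv: "v a = vector[1,0]" "v a' = vector[1,0]" "v d = vector[0,1]" "v d' = vector[0,1]"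
     "v b = vector[1, - 8 * tau]" "v c = vector[1, 8 * sig]"
    unfolding v_def using dd by simp_all
  note hu' = hu[OF inU(1) inU(2)] hu[OF inU(1) inU(3)] hu[OF inU(1) inU(4)] hu[OF inU(1) inU(5)] hu[OF inU(1) inU(6)] hu[OF inU(2) inU(1)] hu[OF inU(2) inU(3)] hu[OF inU(2) inU(4)] hu[OF inU(2) inU(5)] hu[OF inU(2) inU(6)] hu[OF inU(3) inU(1)] hu[OF inU(3) inU(2)] hu[OF inU(3) inU(4)] hu[OF inU(3) inU(5)] hu[OF inU(3) inU(6)] hu[OF inU(4) inU(1)] hu[OF inU(4) inU(2)] hu[OF inU(4) inU(3)] hu[OF inU(4) inU(5)] hu[OF inU(4) inU(6)] hu[OF inU(5) inU(1)] hu[OF inU(5) inU(2)] hu[OF inU(5) inU(3)] hu[OF inU(5) inU(4)] hu[OF inU(5) inU(6)] hu[OF inU(6) inU(1)] hu[OF inU(6) inU(2)] hu[OF inU(6) inU(3)] hu[OF inU(6) inU(4)] hu[OF inU(6) inU(5)]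
  note hw' = hw[OF inU(1) inU(2)] hw[OF inU(1) inU(3)] hw[OF inU(1) inU(4)] hw[OF inU(1) inU(5)] hw[OF inU(1) inU(6)] hw[OF inU(2) inU(1)] hw[OF inU(2) inU(3)] hw[OF inU(2) inU(4)] hw[OF inU(2) inU(5)] hw[OF inU(2) inU(6)] hw[OF inU(3) inU(1)] hw[OF inU(3) inU(2)] hw[OF inU(3) inU(4)] hw[OF inU(3) inU(5)] hw[OF inU(3) inU(6)] hw[OF inU(4) inU(1)] hw[OF inU(4) inU(2)] hw[OF inU(4) inU(3)] hw[OF inU(4) inU(5)] hw[OF inU(4) inU(6)] hw[OF inU(5) inU(1)] hw[OF inU(5) inU(2)] hw[OF inU(5) inU(3)] hw[OF inU(5) inU(4)] hw[OF inU(5) inU(6)] hw[OF inU(6) inU(1)] hw[OF inU(6) inU(2)] hw[OF inU(6) inU(3)] hw[OF inU(6) inU(4)] hw[OF inU(6) inU(5)]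
  have "s * PhiU u P + t * PhiU w P = PhiU v P" for P
  proof (cases "P \<in> pairings6")
    case False
    then show ?thesis by (simp add: PhiU_eq)
  next
    case Pin: True
    obtain m where m: "\<forall>x\<in>{1..6}. m x \<in> {1..6} \<and> m x \<noteq> x \<and> m (m x) = x"
      and mP: "P = (\<lambda>x. {x, m x}) ` {1..6}" using partner[OF Pin] by blast
    from pair15[OF dist U m mP] show ?thesis
    proof (elim disjE)
    assume hP: "P = {{a,a'},{b,c},{d,d'}}"
    have dst: "distinct [a,a',b,c,d,d']" using dd by auto
    note l = leafval[OF Pin hP dst]
    show ?thesis unfolding l by (simp add: hu' hw' dd vv; (simp add: det2_def sig0 tau0 abs_mult)?; (simp add: sig_def tau_def algebra_simps power3_eq_cube)?)
  next
    assume hP: "P = {{a,a'},{b,d},{c,d'}}"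
    have dst: "distinct [a,a',b,d,c,d']" using dd by auto
    note l = leafval[OF Pin hP dst]
    show ?thesis unfolding l by (simp add: hu' hw' dd vv; (simp add: det2_def sig0 tau0 abs_mult)?; (simp add: sig_def tau_def algebra_simps power3_eq_cube)?)
  next
    assume hP: "P = {{a,a'},{b,d'},{c,d}}"
    have dst: "distinct [a,a',b,d',c,d]" using dd by auto
    note l = leafval[OF Pin hP dst]
    show ?thesis unfolding l by (simp add: hu' hw' dd vv; (simp add: det2_def sig0 tau0 abs_mult)?; (simp add: sig_def tau_def algebra_simps power3_eq_cube)?)
  next
    assume hP: "P = {{a,b},{a',c},{d,d'}}"
    have dst: "distinct [a,b,a',c,d,d']" using dd by auto
    note l = leafval[OF Pin hP dst]
    show ?thesis unfolding l by (simp add: hu' hw' dd vv; (simp add: det2_def sig0 tau0 abs_mult)?; (simp add: sig_def tau_def algebra_simps power3_eq_cube)?)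
  next
    assume hP: "P = {{a,b},{a',d},{c,d'}}"
    have dst: "distinct [a,b,a',d,c,d']" using dd by auto
    note l = leafval[OF Pin hP dst]
    show ?thesis unfolding l by (simp add: hu' hw' dd vv; (simp add: det2_def sig0 tau0 abs_mult)?; (simp add: sig_def tau_def algebra_simps power3_eq_cube)?)
  next
    assume hP: "P = {{a,b},{a',d'},{c,d}}"
    have dst: "distinct [a,b,a',d',c,d]" using dd by auto
    note l = leafval[OF Pin hP dst]
    show ?thesis unfolding l by (simp add: hu' hw' dd vv; (simp add: det2_def sig0 tau0 abs_mult)?; (simp add: sig_def tau_def algebra_simps power3_eq_cube)?)
  next
    assume hP: "P = {{a,c},{a',b},{d,d'}}"
    have dst: "distinct [a,c,a',b,d,d']" using dd by auto
    note l = leafval[OF Pin hP dst]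
    show ?thesis unfolding l by (simp add: hu' hw' dd vv; (simp add: det2_def sig0 tau0 abs_mult)?; (simp add: sig_def tau_def algebra_simps power3_eq_cube)?)
  next
    assume hP: "P = {{a,c},{a',d},{b,d'}}"
    have dst: "distinct [a,c,a',d,b,d']" using dd by auto
    note l = leafval[OF Pin hP dst]
    show ?thesis unfolding l by (simp add: hu' hw' dd vv; (simp add: det2_def sig0 tau0 abs_mult)?; (simp add: sig_def tau_def algebra_simps power3_eq_cube)?)
  next
    assume hP: "P = {{a,c},{a',d'},{b,d}}"
    have dst: "distinct [a,c,a',d',b,d]" using dd by auto
    note l = leafval[OF Pin hP dst]
    show ?thesis unfolding l by (simp add: hu' hw' dd vv; (simp add: det2_def sig0 tau0 abs_mult)?; (simp add: sig_def tau_def algebra_simps power3_eq_cube)?)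
  next
    assume hP: "P = {{a,d},{a',b},{c,d'}}"
    have dst: "distinct [a,d,a',b,c,d']" using dd by auto
    note l = leafval[OF Pin hP dst]
    show ?thesis unfolding l by (simp add: hu' hw' dd vv; (simp add: det2_def sig0 tau0 abs_mult)?; (simp add: sig_def tau_def algebra_simps power3_eq_cube)?)
  next
    assume hP: "P = {{a,d},{a',c},{b,d'}}"
    have dst: "distinct [a,d,a',c,b,d']" using dd by auto
    note l = leafval[OF Pin hP dst]
    show ?thesis unfolding l by (simp add: hu' hw' dd vv; (simp add: det2_def sig0 tau0 abs_mult)?; (simp add: sig_def tau_def algebra_simps power3_eq_cube)?)
  next
    assume hP: "P = {{a,d},{a',d'},{b,c}}"
    have dst: "distinct [a,d,a',d',b,c]" using dd by auto
    note l = leafval[OF Pin hP dst]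
    show ?thesis unfolding l by (simp add: hu' hw' dd vv; (simp add: det2_def sig0 tau0 abs_mult)?; (simp add: sig_def tau_def algebra_simps power3_eq_cube)?)
  next
    assume hP: "P = {{a,d'},{a',b},{c,d}}"
    have dst: "distinct [a,d',a',b,c,d]" using dd by auto
    note l = leafval[OF Pin hP dst]
    show ?thesis unfolding l by (simp add: hu' hw' dd vv; (simp add: det2_def sig0 tau0 abs_mult)?; (simp add: sig_def tau_def algebra_simps power3_eq_cube)?)
  next
    assume hP: "P = {{a,d'},{a',c},{b,d}}"
    have dst: "distinct [a,d',a',c,b,d]" using dd by auto
    note l = leafval[OF Pin hP dst]
    show ?thesis unfolding l by (simp add: hu' hw' dd vv; (simp add: det2_def sig0 tau0 abs_mult)?; (simp add: sig_def tau_def algebra_simps power3_eq_cube)?)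
  next
    assume hP: "P = {{a,d'},{a',d},{b,c}}"
    have dst: "distinct [a,d',a',d,b,c]" using dd by auto
    note l = leafval[OF Pin hP dst]
    show ?thesis unfolding l by (simp add: hu' hw' dd vv; (simp add: det2_def sig0 tau0 abs_mult)?; (simp add: sig_def tau_def algebra_simps power3_eq_cube)?)
    qed
  qed
  then show ?thesis by blast
qed

lemma core_same:
  fixes x1 x2 x3 x4 x5 x6 :: nat
  assumes dist: "distinct [x1,x2,x3,x4,x5,x6]" and U: "{1..6} = {x1,x2,x3,x4,x5,x6}"
  and hu: "\<And>i j. i\<in>{1..6} \<Longrightarrow> j\<in>{1..6} \<Longrightarrow> \<bar>det2 (u i) (u j)\<bar> = (if (i \<in> {x1,x2,x3}) = (j \<in> {x1,x2,x3}) then 0 else Wu i * Wu j * du)"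
  and hw: "\<And>i j. i\<in>{1..6} \<Longrightarrow> j\<in>{1..6} \<Longrightarrow> \<bar>det2 (w i) (w j)\<bar> = (if (i \<in> {x1,x2,x3}) = (j \<in> {x1,x2,x3}) then 0 else Ww i * Ww j * dw)"
  and nn: "0 \<le> s" "0 \<le> t" "0 \<le> du" "0 \<le> dw" "\<forall>i. 0 \<le> Wu i" "\<forall>i. 0 \<le> Ww i"
  shows "\<exists>v. (\<lambda>P. s * PhiU u P + t * PhiU w P) = PhiU v"
proof -
  have dd: "x1 \<noteq> x2" "x1 \<noteq> x3" "x1 \<noteq> x4" "x1 \<noteq> x5" "x1 \<noteq> x6" "x2 \<noteq> x1" "x2 \<noteq> x3" "x2 \<noteq> x4" "x2 \<noteq> x5" "x2 \<noteq> x6" "x3 \<noteq> x1" "x3 \<noteq> x2" "x3 \<noteq> x4" "x3 \<noteq> x5" "x3 \<noteq> x6" "x4 \<noteq> x1" "x4 \<noteq> x2" "x4 \<noteq> x3" "x4 \<noteq> x5" "x4 \<noteq> x6" "x5 \<noteq> x1" "x5 \<noteq> x2" "x5 \<noteq> x3" "x5 \<noteq> x4" "x5 \<noteq> x6" "x6 \<noteq> x1" "x6 \<noteq> x2" "x6 \<noteq> x3" "x6 \<noteq> x4" "x6 \<noteq> x5" using dist by auto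
  have inU: "x1 \<in> {1..6}" "x2 \<in> {1..6}" "x3 \<in> {1..6}" "x4 \<in> {1..6}" "x5 \<in> {1..6}" "x6 \<in> {1..6}"
    unfolding U by simp_all
  define sig where "sig = s * du^3 * (Wu x1 * Wu x2 * Wu x3 * Wu x4 * Wu x5 * Wu x6) / 8"
  define tau where "tau = t * dw^3 * (Ww x1 * Ww x2 * Ww x3 * Ww x4 * Ww x5 * Ww x6) / 8"
  have sig0: "0 \<le> sig" unfolding sig_def using nn by simp
  have tau0: "0 \<le> tau" unfolding tau_def using nn by simp
  define v :: "nat \<Rightarrow> real^2" where "v i = (if i = x1 \<or> i = x2 \<or> i = x3 then vector[1,0] else if i = x4 \<or> i = x5 then vector[0,1]
     else vector[0, 8 * (sig + tau)])" for i
  have vv: "v x1 = vector[1,0]" "v x2 = vector[1,0]" "v x3 = vector[1,0]" "v x4 = vector[0,1]" "v x5 = vector[0,1]"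
     "v x6 = vector[0, 8 * (sig + tau)]"
    unfolding v_def using dd by simp_all
  note hu' = hu[OF inU(1) inU(2)] hu[OF inU(1) inU(3)] hu[OF inU(1) inU(4)] hu[OF inU(1) inU(5)] hu[OF inU(1) inU(6)] hu[OF inU(2) inU(1)] hu[OF inU(2) inU(3)] hu[OF inU(2) inU(4)] hu[OF inU(2) inU(5)] hu[OF inU(2) inU(6)] hu[OF inU(3) inU(1)] hu[OF inU(3) inU(2)] hu[OF inU(3) inU(4)] hu[OF inU(3) inU(5)] hu[OF inU(3) inU(6)] hu[OF inU(4) inU(1)] hu[OF inU(4) inU(2)] hu[OF inU(4) inU(3)] hu[OF inU(4) inU(5)] hu[OF inU(4) inU(6)] hu[OF inU(5) inU(1)] hu[OF inU(5) inU(2)] hu[OF inU(5) inU(3)] hu[OF inU(5) inU(4)] hu[OF inU(5) inU(6)] hu[OF inU(6) inU(1)] hu[OF inU(6) inU(2)] hu[OF inU(6) inU(3)] hu[OF inU(6) inU(4)] hu[OF inU(6) inU(5)]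
  note hw' = hw[OF inU(1) inU(2)] hw[OF inU(1) inU(3)] hw[OF inU(1) inU(4)] hw[OF inU(1) inU(5)] hw[OF inU(1) inU(6)] hw[OF inU(2) inU(1)] hw[OF inU(2) inU(3)] hw[OF inU(2) inU(4)] hw[OF inU(2) inU(5)] hw[OF inU(2) inU(6)] hw[OF inU(3) inU(1)] hw[OF inU(3) inU(2)] hw[OF inU(3) inU(4)] hw[OF inU(3) inU(5)] hw[OF inU(3) inU(6)] hw[OF inU(4) inU(1)] hw[OF inU(4) inU(2)] hw[OF inU(4) inU(3)] hw[OF inU(4) inU(5)] hw[OF inU(4) inU(6)] hw[OF inU(5) inU(1)] hw[OF inU(5) inU(2)] hw[OF inU(5) inU(3)] hw[OF inU(5) inU(4)] hw[OF inU(5) inU(6)] hw[OF inU(6) inU(1)] hw[OF inU(6) inU(2)] hw[OF inU(6) inU(3)] hw[OF inU(6) inU(4)] hw[OF inU(6) inU(5)]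
  have "s * PhiU u P + t * PhiU w P = PhiU v P" for P
  proof (cases "P \<in> pairings6")
    case False
    then show ?thesis by (simp add: PhiU_eq)
  next
    case Pin: True
    obtain m where m: "\<forall>x\<in>{1..6}. m x \<in> {1..6} \<and> m x \<noteq> x \<and> m (m x) = x"
      and mP: "P = (\<lambda>x. {x, m x}) ` {1..6}" using partner[OF Pin] by blast
    from pair15[OF dist U m mP] show ?thesis
    proof (elim disjE)
    assume hP: "P = {{x1,x2},{x3,x4},{x5,x6}}"
    have dst: "distinct [x1,x2,x3,x4,x5,x6]" using dd by auto
    note l = leafval[OF Pin hP dst]
    show ?thesis unfolding l by (simp add: hu' hw' dd vv; (simp add: det2_def sig0 tau0 abs_mult)?; (simp add: sig_def tau_def algebra_simps power3_eq_cube)?)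
  next
    assume hP: "P = {{x1,x2},{x3,x5},{x4,x6}}"
    have dst: "distinct [x1,x2,x3,x5,x4,x6]" using dd by auto
    note l = leafval[OF Pin hP dst]
    show ?thesis unfolding l by (simp add: hu' hw' dd vv; (simp add: det2_def sig0 tau0 abs_mult)?; (simp add: sig_def tau_def algebra_simps power3_eq_cube)?)
  next
    assume hP: "P = {{x1,x2},{x3,x6},{x4,x5}}"
    have dst: "distinct [x1,x2,x3,x6,x4,x5]" using dd by auto
    note l = leafval[OF Pin hP dst]
    show ?thesis unfolding l by (simp add: hu' hw' dd vv; (simp add: det2_def sig0 tau0 abs_mult)?; (simp add: sig_def tau_def algebra_simps power3_eq_cube)?)
  next
    assume hP: "P = {{x1,x3},{x2,x4},{x5,x6}}"
    have dst: "distinct [x1,x3,x2,x4,x5,x6]" using dd by auto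
    note l = leafval[OF Pin hP dst]
    show ?thesis unfolding l by (simp add: hu' hw' dd vv; (simp add: det2_def sig0 tau0 abs_mult)?; (simp add: sig_def tau_def algebra_simps power3_eq_cube)?)
  next
    assume hP: "P = {{x1,x3},{x2,x5},{x4,x6}}"
    have dst: "distinct [x1,x3,x2,x5,x4,x6]" using dd by auto
    note l = leafval[OF Pin hP dst]
    show ?thesis unfolding l by (simp add: hu' hw' dd vv; (simp add: det2_def sig0 tau0 abs_mult)?; (simp add: sig_def tau_def algebra_simps power3_eq_cube)?)
  next
    assume hP: "P = {{x1,x3},{x2,x6},{x4,x5}}"
    have dst: "distinct [x1,x3,x2,x6,x4,x5]" using dd by auto
    note l = leafval[OF Pin hP dst]
    show ?thesis unfolding l by (simp add: hu' hw' dd vv; (simp add: det2_def sig0 tau0 abs_mult)?; (simp add: sig_def tau_def algebra_simps power3_eq_cube)?)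
  next
    assume hP: "P = {{x1,x4},{x2,x3},{x5,x6}}"
    have dst: "distinct [x1,x4,x2,x3,x5,x6]" using dd by auto
    note l = leafval[OF Pin hP dst]
    show ?thesis unfolding l by (simp add: hu' hw' dd vv; (simp add: det2_def sig0 tau0 abs_mult)?; (simp add: sig_def tau_def algebra_simps power3_eq_cube)?)
  next
    assume hP: "P = {{x1,x4},{x2,x5},{x3,x6}}"
    have dst: "distinct [x1,x4,x2,x5,x3,x6]" using dd by auto
    note l = leafval[OF Pin hP dst]
    show ?thesis unfolding l by (simp add: hu' hw' dd vv; (simp add: det2_def sig0 tau0 abs_mult)?; (simp add: sig_def tau_def algebra_simps power3_eq_cube)?)
  next
    assume hP: "P = {{x1,x4},{x2,x6},{x3,x5}}"
    have dst: "distinct [x1,x4,x2,x6,x3,x5]" using dd by auto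
    note l = leafval[OF Pin hP dst]
    show ?thesis unfolding l by (simp add: hu' hw' dd vv; (simp add: det2_def sig0 tau0 abs_mult)?; (simp add: sig_def tau_def algebra_simps power3_eq_cube)?)
  next
    assume hP: "P = {{x1,x5},{x2,x3},{x4,x6}}"
    have dst: "distinct [x1,x5,x2,x3,x4,x6]" using dd by auto
    note l = leafval[OF Pin hP dst]
    show ?thesis unfolding l by (simp add: hu' hw' dd vv; (simp add: det2_def sig0 tau0 abs_mult)?; (simp add: sig_def tau_def algebra_simps power3_eq_cube)?)
  next
    assume hP: "P = {{x1,x5},{x2,x4},{x3,x6}}"
    have dst: "distinct [x1,x5,x2,x4,x3,x6]" using dd by auto
    note l = leafval[OF Pin hP dst]
    show ?thesis unfolding l by (simp add: hu' hw' dd vv; (simp add: det2_def sig0 tau0 abs_mult)?; (simp add: sig_def tau_def algebra_simps power3_eq_cube)?)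
  next
    assume hP: "P = {{x1,x5},{x2,x6},{x3,x4}}"
    have dst: "distinct [x1,x5,x2,x6,x3,x4]" using dd by auto
    note l = leafval[OF Pin hP dst]
    show ?thesis unfolding l by (simp add: hu' hw' dd vv; (simp add: det2_def sig0 tau0 abs_mult)?; (simp add: sig_def tau_def algebra_simps power3_eq_cube)?)
  next
    assume hP: "P = {{x1,x6},{x2,x3},{x4,x5}}"
    have dst: "distinct [x1,x6,x2,x3,x4,x5]" using dd by auto
    note l = leafval[OF Pin hP dst]
    show ?thesis unfolding l by (simp add: hu' hw' dd vv; (simp add: det2_def sig0 tau0 abs_mult)?; (simp add: sig_def tau_def algebra_simps power3_eq_cube)?)
  next
    assume hP: "P = {{x1,x6},{x2,x4},{x3,x5}}"
    have dst: "distinct [x1,x6,x2,x4,x3,x5]" using dd by auto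
    note l = leafval[OF Pin hP dst]
    show ?thesis unfolding l by (simp add: hu' hw' dd vv; (simp add: det2_def sig0 tau0 abs_mult)?; (simp add: sig_def tau_def algebra_simps power3_eq_cube)?)
  next
    assume hP: "P = {{x1,x6},{x2,x5},{x3,x4}}"
    have dst: "distinct [x1,x6,x2,x5,x3,x4]" using dd by auto
    note l = leafval[OF Pin hP dst]
    show ?thesis unfolding l by (simp add: hu' hw' dd vv; (simp add: det2_def sig0 tau0 abs_mult)?; (simp add: sig_def tau_def algebra_simps power3_eq_cube)?)
    qed
  qed
  then show ?thesis by blast
qed



lemma det2_scale: "det2 (a *\<^sub>R x) (b *\<^sub>R y) = a * b * det2 x y"
  by (simp add: det2_def algebra_simps)

lemma det2_self: "det2 x x = 0"
  by (simp add: det2_def algebra_simps)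

lemma type33_form:
  assumes "type33 u"
  shows "\<exists>J1 W \<delta>. J1 \<subseteq> {1..6} \<and> card J1 = 3 \<and> \<delta> \<ge> 0 \<and> (\<forall>i. W i \<ge> 0) \<and>
     (\<forall>i\<in>{1..6}. \<forall>j\<in>{1..6}. \<bar>det2 (u i) (u j)\<bar> = (if (i \<in> J1) = (j \<in> J1) then 0 else W i * W j * \<delta>))"
proof -
  obtain J1 J2 where U: "J1 \<union> J2 = {1..6}" and dj: "J1 \<inter> J2 = {}" and c1: "card J1 = 3" and c2: "card J2 = 3"
    and p1: "\<forall>i\<in>J1. \<forall>j\<in>J1. parallel2 (u i) (u j)" and p2: "\<forall>i\<in>J2. \<forall>j\<in>J2. parallel2 (u i) (u j)"
    using assms unfolding type33_def by blast
  obtain i0 where i0: "i0 \<in> J1" using c1 by (metis card.empty ex_in_conv zero_neq_numeral)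
  obtain j0 where j0: "j0 \<in> J2" using c2 by (metis card.empty ex_in_conv zero_neq_numeral)
  define c where "c i = (if i \<in> J1 then (SOME k. u i = k *\<^sub>R u i0) else (SOME k. u i = k *\<^sub>R u j0))" for i
  have cJ1: "u i = c i *\<^sub>R u i0" if "i \<in> J1" for i
  proof -
    have "\<exists>k. u i = k *\<^sub>R u i0" using p1 that i0 unfolding parallel2_def by blast
    then have "u i = (SOME k. u i = k *\<^sub>R u i0) *\<^sub>R u i0" by (rule someI_ex)
    then show ?thesis unfolding c_def using that by simp
  qed
  have cJ2: "u i = c i *\<^sub>R u j0" if "i \<in> J2" for i
  proof -
    have "i \<notin> J1" using that dj by blast
    moreover have "\<exists>k. u i = k *\<^sub>R u j0" using p2 that j0 unfolding parallel2_def by blast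
    moreover have "\<exists>k. u i = k *\<^sub>R u j0" using p2 that j0 unfolding parallel2_def by blast
    then have "u i = (SOME k. u i = k *\<^sub>R u j0) *\<^sub>R u j0" by (rule someI_ex)
    ultimately show ?thesis unfolding c_def by simp
  qed
  define \<delta> where "\<delta> = \<bar>det2 (u i0) (u j0)\<bar>"
  have "\<forall>i\<in>{1..6}. \<forall>j\<in>{1..6}. \<bar>det2 (u i) (u j)\<bar> = (if (i \<in> J1) = (j \<in> J1) then 0 else \<bar>c i\<bar> * \<bar>c j\<bar> * \<delta>)"
  proof (intro ballI)
    fix i j :: nat assume i: "i \<in> {1..6}" and j: "j \<in> {1..6}"
    have i2: "i \<notin> J1 \<Longrightarrow> i \<in> J2" and j2: "j \<notin> J1 \<Longrightarrow> j \<in> J2" using i j U by blast+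
    show "\<bar>det2 (u i) (u j)\<bar> = (if (i \<in> J1) = (j \<in> J1) then 0 else \<bar>c i\<bar> * \<bar>c j\<bar> * \<delta>)"
    proof (cases "i \<in> J1"; cases "j \<in> J1")
      assume "i \<in> J1" "j \<in> J1" then show ?thesis by (simp add: cJ1 det2_scale det2_self)
    next
      assume "i \<in> J1" "j \<notin> J1" then show ?thesis by (simp add: cJ1 cJ2 j2 det2_scale \<delta>_def abs_mult)
    next
      assume "i \<notin> J1" "j \<in> J1" then show ?thesis
        by (simp add: cJ1 cJ2 i2 det2_scale \<delta>_def abs_mult det2_swap[of "u i0"])
    next
      assume "i \<notin> J1" "j \<notin> J1" then show ?thesis by (simp add: cJ2 i2 j2 det2_scale det2_self)
    qed
  qed
  moreover have "J1 \<subseteq> {1..6}" using U by blast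
  ultimately show ?thesis using c1 unfolding \<delta>_def by (intro exI[of _ J1] exI[of _ "\<lambda>i. \<bar>c i\<bar>"] exI[of _ \<delta>]) (simp add: \<delta>_def)
qed

lemma split_same:
  assumes "J1 \<subseteq> {1..6::nat}" "card J1 = 3"
  shows "\<exists>x1 x2 x3 x4 x5 x6. distinct [x1,x2,x3,x4,x5,x6] \<and> {1..6} = {x1,x2,x3,x4,x5,x6} \<and> J1 = {x1,x2,x3}"
proof -
  obtain x1 x2 x3 where J: "J1 = {x1,x2,x3}" "x1 \<noteq> x2" "x2 \<noteq> x3" "x1 \<noteq> x3" using assms(2) card_3_iff by metis
  have "finite J1" using assms(1) finite_subset by blast
  then have "card ({1..6::nat} - J1) = 3" using assms by (simp add: card_Diff_subset)
  then obtain x4 x5 x6 where K: "{1..6} - J1 = {x4,x5,x6}" "x4 \<noteq> x5" "x5 \<noteq> x6" "x4 \<noteq> x6" using card_3_iff by metis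
  have "{1..6} = J1 \<union> ({1..6} - J1)" using assms by blast
  then have "{1..6} = {x1,x2,x3,x4,x5,x6}" using J K by auto
  moreover have "distinct [x1,x2,x3,x4,x5,x6]" using J K by (auto simp: insert_Diff_if)
  ultimately show ?thesis using J by blast
qed

lemma split_distinct:
  assumes "J1 \<subseteq> {1..6::nat}" "K1 \<subseteq> {1..6}" "card J1 = 3" "card K1 = 3" "card (J1 \<inter> K1) = 2"
  shows "\<exists>a a' b c d d'. distinct [a,a',b,c,d,d'] \<and> {1..6} = {a,a',b,c,d,d'} \<and> J1 = {a,a',b} \<and> K1 = {a,a',c}"
proof -
  have fJ: "finite J1" and fK: "finite K1" using assms(1,2) finite_subset by blast+
  obtain a a' where A: "J1 \<inter> K1 = {a,a'}" "a \<noteq> a'" using assms(5) card_2_iff by metis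
  have "card (J1 - K1) = 1" using fJ assms by (simp add: card_Diff_subset_Int)
  then obtain b where B: "J1 - K1 = {b}" using card_1_singleton_iff by (metis One_nat_def)
  have "card (K1 - J1) = 1" using fK assms by (simp add: card_Diff_subset_Int Int_commute)
  then obtain c where C: "K1 - J1 = {c}" using card_1_singleton_iff by (metis One_nat_def)
  have cU: "card (J1 \<union> K1) = 4" using card_Un_Int[OF fJ fK] assms by simp
  have "card ({1..6} - (J1 \<union> K1)) = 2" using cU assms fJ fK by (simp add: card_Diff_subset)
  then obtain d d' where D: "{1..6} - (J1 \<union> K1) = {d,d'}" "d \<noteq> d'" using card_2_iff by metis
  have J: "J1 = {a,a',b}" using A B by blast
  have K: "K1 = {a,a',c}" using A C by blast
  have "{1..6} = (J1 \<union> K1) \<union> ({1..6} - (J1 \<union> K1))" using assms(1,2) by blast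
  also have "\<dots> = (J1 \<union> K1) \<union> {d,d'}" by (simp only: D)
  also have "\<dots> = {a,a',b,c,d,d'}" unfolding J K by auto
  finally have "{1..6} = {a,a',b,c,d,d'}" .
  moreover have mem: "a \<in> J1" "a \<in> K1" "a' \<in> J1" "a' \<in> K1" "b \<in> J1" "b \<notin> K1" "c \<in> K1" "c \<notin> J1"
    "d \<notin> J1" "d \<notin> K1" "d' \<notin> J1" "d' \<notin> K1"
    using A B C D by blast+
  then have "distinct [a,a',b,c,d,d']" using A(2) D(2) by (simp; metis)
  ultimately show ?thesis using J K by blast
qed


lemma choose_K:
  assumes "J1 \<subseteq> {1..6::nat}" "K1 \<subseteq> {1..6}" "card J1 = 3" "card K1 = 3"
    and ne: "\<not> (\<forall>i\<in>{1..6}. \<forall>j\<in>{1..6}. ((i\<in>K1) = (j\<in>K1)) = ((i\<in>J1) = (j\<in>J1)))"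
  shows "\<exists>K'. K' \<subseteq> {1..6} \<and> card K' = 3 \<and> card (J1 \<inter> K') = 2 \<and>
     (\<forall>i\<in>{1..6}. \<forall>j\<in>{1..6}. ((i\<in>K') = (j\<in>K')) = ((i\<in>K1) = (j\<in>K1)))"
proof -
  have fJ: "finite J1" and fK: "finite K1" using assms(1,2) finite_subset by blast+
  have le: "card (J1 \<inter> K1) \<le> 3" using card_mono[OF fJ, of "J1 \<inter> K1"] assms(3) by simp
  have n3: "card (J1 \<inter> K1) \<noteq> 3"
  proof
    assume c3: "card (J1 \<inter> K1) = 3"
    have e1: "J1 \<inter> K1 = J1" using card_subset_eq[OF fJ, of "J1 \<inter> K1"] c3 assms(3) by (metis Int_lower1)
    have e2: "J1 \<inter> K1 = K1" using card_subset_eq[OF fK, of "J1 \<inter> K1"] c3 assms(4) by (metis Int_lower2)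
    have eq: "J1 = K1" using e1 e2 by simp
    have "\<forall>i\<in>{1..6}. \<forall>j\<in>{1..6}. ((i\<in>K1) = (j\<in>K1)) = ((i\<in>J1) = (j\<in>J1))" unfolding eq by simp
    then show False using ne by blast
  qed
  have n0: "card (J1 \<inter> K1) \<noteq> 0"
  proof
    assume "card (J1 \<inter> K1) = 0"
    then have e: "J1 \<inter> K1 = {}" using fJ by simp
    have f2: "finite ({1..6::nat} - K1)" by simp
    have "card ({1..6::nat} - K1) = 3" using fK assms by (simp add: card_Diff_subset)
    moreover have "J1 \<subseteq> {1..6} - K1" using e assms(1) by blast
    ultimately have eq: "J1 = {1..6} - K1" using card_subset_eq[OF f2, of J1] assms(3) by argo
    have "\<forall>i\<in>{1..6}. \<forall>j\<in>{1..6}. ((i\<in>K1) = (j\<in>K1)) = ((i\<in>J1) = (j\<in>J1))" unfolding eq by simp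
    then show False using ne by blast
  qed
  show ?thesis
  proof (cases "card (J1 \<inter> K1) = 2")
    case True
    then show ?thesis using assms by (intro exI[of _ K1]) simp
  next
    case False
    then have c1: "card (J1 \<inter> K1) = 1" using le n3 n0 by linarith
    have "J1 \<inter> ({1..6} - K1) = J1 - K1" using assms(1) by blast
    then have "card (J1 \<inter> ({1..6} - K1)) = card (J1 - K1)" by simp
    also have "\<dots> = 2" using fJ c1 assms(3) by (simp add: card_Diff_subset_Int)
    finally have "card (J1 \<inter> ({1..6} - K1)) = 2" .
    moreover have "card ({1..6::nat} - K1) = 3" using fK assms by (simp add: card_Diff_subset)
    moreover have "\<forall>i\<in>{1..6}. \<forall>j\<in>{1..6}. ((i\<in>{1..6} - K1) = (j\<in>{1..6} - K1)) = ((i\<in>K1) = (j\<in>K1))" by simp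
    ultimately show ?thesis by (intro exI[of _ "{1..6} - K1"]) simp
  qed
qed


lemma zonoid_seg: "zonoid2 (closed_segment 0 x)"
  unfolding zonoid2_def
proof (intro conjI)
  show "closed_segment 0 x \<noteq> {}" by simp
  show "compact (closed_segment 0 x)" by (rule compact_segment)
  show "convex (closed_segment 0 x)" by (rule convex_closed_segment)
  show "\<exists>c. \<forall>p\<in>closed_segment 0 x. 2 *\<^sub>R c - p \<in> closed_segment 0 x"
  proof (intro exI[of _ "(1/2) *\<^sub>R x"] ballI)
    fix p assume "p \<in> closed_segment 0 x"
    then obtain v where v: "0 \<le> v" "v \<le> 1" "p = v *\<^sub>R x" by (auto simp: closed_segment_def)
    have "2 *\<^sub>R ((1/2) *\<^sub>R x) - p = (1 - v) *\<^sub>R x" using v by (simp add: algebra_simps)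
    moreover have "(1 - v) *\<^sub>R x \<in> closed_segment 0 x" using v by (auto simp: closed_segment_def)
    ultimately show "2 *\<^sub>R ((1/2) *\<^sub>R x) - p \<in> closed_segment 0 x" by simp
  qed
qed

lemma PhiU_in: "PhiU v \<in> Phi_image"
  unfolding Phi_image_def PhiU_def zonoid_tuples_def using zonoid_seg by blast

theorem proposition7p5:
  fixes \<rho>1 \<rho>2 :: "(nat set set \<Rightarrow> real) set"
  assumes "extreme_ray_C62 \<rho>1" and "extreme_ray_C62 \<rho>2"
    and "ray_type33 \<rho>1" and "ray_type33 \<rho>2"
    and "\<rho>1 \<noteq> \<rho>2"
  shows "cone_sum \<rho>1 \<rho>2 \<subseteq> Phi_image"
proof
  fix z assume "z \<in> cone_sum \<rho>1 \<rho>2"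
  then obtain x y where z: "z = (\<lambda>P. x P + y P)" and x: "x \<in> \<rho>1" and y: "y \<in> \<rho>2"
    unfolding cone_sum_def by blast
  obtain u where u: "type33 u" "\<rho>1 = ray_of (PhiU u)" using assms(3) unfolding ray_type33_def by blast
  obtain w where w: "type33 w" "\<rho>2 = ray_of (PhiU w)" using assms(4) unfolding ray_type33_def by blast
  obtain s where s: "x = (\<lambda>P. s * PhiU u P)" "s \<ge> 0" using x u(2) unfolding ray_of_def by blast
  obtain t where t: "y = (\<lambda>P. t * PhiU w P)" "t \<ge> 0" using y w(2) unfolding ray_of_def by blast
  obtain J1 Wu du where J: "J1 \<subseteq> {1..6}" "card J1 = 3" "du \<ge> 0" "\<forall>i. Wu i \<ge> 0"
     and hu: "\<forall>i\<in>{1..6}. \<forall>j\<in>{1..6}. \<bar>det2 (u i) (u j)\<bar> = (if (i \<in> J1) = (j \<in> J1) then 0 else Wu i * Wu j * du)"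
    using type33_form[OF u(1)] by blast
  obtain K1 Ww dw where K: "K1 \<subseteq> {1..6}" "card K1 = 3" "dw \<ge> 0" "\<forall>i. Ww i \<ge> 0"
     and hw: "\<forall>i\<in>{1..6}. \<forall>j\<in>{1..6}. \<bar>det2 (w i) (w j)\<bar> = (if (i \<in> K1) = (j \<in> K1) then 0 else Ww i * Ww j * dw)"
    using type33_form[OF w(1)] by blast
  have "\<exists>v. (\<lambda>P. s * PhiU u P + t * PhiU w P) = PhiU v"
  proof (cases "\<forall>i\<in>{1..6}. \<forall>j\<in>{1..6}. ((i\<in>K1) = (j\<in>K1)) = ((i\<in>J1) = (j\<in>J1))")
    case True
    obtain x1 x2 x3 x4 x5 x6 where X: "distinct [x1,x2,x3,x4,x5,x6]" "{1..6} = {x1,x2,x3,x4,x5,x6}" "J1 = {x1,x2,x3}"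
      using split_same[OF J(1,2)] by blast
    show ?thesis
    proof (rule core_same[OF X(1,2), where Wu=Wu and du=du and Ww=Ww and dw=dw])
      fix i j :: nat assume "i \<in> {1..6}" "j \<in> {1..6}"
      then show "\<bar>det2 (u i) (u j)\<bar> = (if (i \<in> {x1,x2,x3}) = (j \<in> {x1,x2,x3}) then 0 else Wu i * Wu j * du)"
        using hu X(3) by simp
    next
      fix i j :: nat assume ij: "i \<in> {1..6}" "j \<in> {1..6}"
      then show "\<bar>det2 (w i) (w j)\<bar> = (if (i \<in> {x1,x2,x3}) = (j \<in> {x1,x2,x3}) then 0 else Ww i * Ww j * dw)"
        using hw True X(3) by simp
    qed (use s t J K in auto)
  next
    case False
    obtain K' where K': "K' \<subseteq> {1..6}" "card K' = 3" "card (J1 \<inter> K') = 2"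
      "\<forall>i\<in>{1..6}. \<forall>j\<in>{1..6}. ((i\<in>K') = (j\<in>K')) = ((i\<in>K1) = (j\<in>K1))"
      using choose_K[OF J(1) K(1) J(2) K(2) False] by blast
    obtain a a' b c d d' where X: "distinct [a,a',b,c,d,d']" "{1..6} = {a,a',b,c,d,d'}" "J1 = {a,a',b}" "K' = {a,a',c}"
      using split_distinct[OF J(1) K'(1) J(2) K'(2,3)] by blast
    show ?thesis
    proof (rule core_distinct[OF X(1,2), where Wu=Wu and du=du and Ww=Ww and dw=dw])
      fix i j :: nat assume "i \<in> {1..6}" "j \<in> {1..6}"
      then show "\<bar>det2 (u i) (u j)\<bar> = (if (i \<in> {a,a',b}) = (j \<in> {a,a',b}) then 0 else Wu i * Wu j * du)"
        using hu X(3) by simp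
    next
      fix i j :: nat assume ij: "i \<in> {1..6}" "j \<in> {1..6}"
      then show "\<bar>det2 (w i) (w j)\<bar> = (if (i \<in> {a,a',c}) = (j \<in> {a,a',c}) then 0 else Ww i * Ww j * dw)"
        using hw K'(4) X(4) by simp
    qed (use s t J K in auto)
  qed
  then obtain v where "(\<lambda>P. s * PhiU u P + t * PhiU w P) = PhiU v" by blast
  then have "z = PhiU v" using z s t by simp
  then show "z \<in> Phi_image" using PhiU_in by simp
qed


end
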